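(* Let $G$ be a finite connected groupoid with $G_0=\{e_1,\dots,e_r\}$, $A=\bigoplus_{i=1}^r A_i$ a unital ring with $A_i:=A_{e_i}$ having identity $1_i$, and $\alpha=(A_g,\alpha_g)_{g\in G}$ a unital partial action of $G$ on $A$. The following are equivalent: (i) $A\subset A\star_\alpha G$ is a separable extension; (ii) there exists $a\in C(A)$ (the center of $A$) such that $t_i(a)=1_i$ for all $i=1,\dots,r$.
   Context: A groupoid $G$ is a small category in which every morphism is invertible; $G_0$ is its object set (objects identified with identity morphisms), $s,t$ source and target; $gh$ is defined iff $s(g)=t(h)$; $G(e,f)$ is the set of morphisms from $e$ to $f$; $G$ is connected if $G(e,f)\neq\emptyset$ for all $e,f\in G_0$. A unital partial action of $G$ on $A$ is a family $\alpha=(A_g,\alpha_g)_{g\in G}$ where $A_{t(g)}$ is a two-sided ideal of $A$, $A_g=A1_g$ is a two-sided ideal of $A_{t(g)}$ with $1_g$ a central idempotent of $A$, $\alpha_g:A_{g^{-1}}\to A_g$ a ring isomorphism, such that $\alpha_e=\mathrm{id}_{A_e}$ for $e\in G_0$, $\alpha_h^{-1}(A_{g^{-1}}\cap A_h)\subseteq A_{(gh)^{-1}}$ and $\alpha_g(\alpha_h(x))=\alpha_{gh}(x)$ for $x\in\alpha_h^{-1}(A_{g^{-1}}\cap A_h)$, whenever $s(g)=t(h)$. The partial skew groupoid ring $A\star_\alpha G=\bigoplus_{g\in G}A_g\delta_g$ has multiplication $(a_g\delta_g)(b_h\delta_h)=\alpha_g(\alpha_{g^{-1}}(a_g)b_h)\delta_{gh}$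 if $s(g)=t(h)$ and $0$ otherwise; it is unital with $1=\sum_{e\in G_0}1_e\delta_e$, and $A$ is regarded as a subring via $a\mapsto\sum_{e\in G_0}(a1_e)\delta_e$. Trace maps: $t_{i,j}(a)=\sum_{g\in G(e_i,e_j)}\alpha_g(a1_{g^{-1}})$ and $t_j(a)=\sum_{i=1}^r t_{i,j}(a)$ for $a\in A$. A ring extension $R\subseteq S$ is separable if the multiplication map $S\otimes_R S\to S$ splits as a map of $(S,S)$-bimodules; equivalently there exists $x\in S\otimes_R S$ with $m(x)=1_S$ and $sx=xs$ for all $s\in S$. *)

theory Defs
  imports Main
begin

text \<open>A groupoid given by its set of morphisms, its set of objects (identified with
identity morphisms), source, target, partial composition and inversion.
cmp g h is the composite gh, defined when src g = tgt h.\<close>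

record 'g groupoid =
  mor  :: "'g set"
  obj  :: "'g set"
  src  :: "'g \<Rightarrow> 'g"
  tgt  :: "'g \<Rightarrow> 'g"
  cmp  :: "'g \<Rightarrow> 'g \<Rightarrow> 'g"
  ginv :: "'g \<Rightarrow> 'g"

definition is_groupoid :: "'g groupoid \<Rightarrow> bool" where
  "is_groupoid G \<longleftrightarrow>
     obj G \<subseteq> mor G \<and>
     (\<forall>g\<in>mor G. src G g \<in> obj G \<and> tgt G g \<in> obj G) \<and>
     (\<forall>e\<in>obj G. src G e = e \<and> tgt G e = e) \<and>
     (\<forall>g\<in>mor G. \<forall>h\<in>mor G. src G g = tgt G h \<longrightarrow>
        cmp G g h \<in> mor G \<and> src G (cmp G g h) = src G h \<and> tgt G (cmp G g h) = tgt G g) \<and>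
     (\<forall>f\<in>mor G. \<forall>g\<in>mor G. \<forall>h\<in>mor G. src G f = tgt G g \<and> src G g = tgt G h \<longrightarrow>
        cmp G (cmp G f g) h = cmp G f (cmp G g h)) \<and>
     (\<forall>g\<in>mor G. cmp G g (src G g) = g \<and> cmp G (tgt G g) g = g) \<and>
     (\<forall>g\<in>mor G. ginv G g \<in> mor G \<and> src G (ginv G g) = tgt G g \<and> tgt G (ginv G g) = src G g
        \<and> cmp G g (ginv G g) = tgt G g \<and> cmp G (ginv G g) g = src G g)"

definition connected_groupoid :: "'g groupoid \<Rightarrow> bool" where
  "connected_groupoid G \<longleftrightarrow>
     (\<forall>e\<in>obj G. \<forall>f\<in>obj G. \<exists>g\<in>mor G. src G g = e \<and> tgt G g = f)"

definition hom :: "'g groupoid \<Rightarrow> 'g \<Rightarrow> 'g \<Rightarrow> 'g set" where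
  "hom G e f = {g \<in> mor G. src G g = e \<and> tgt G g = f}"

text \<open>u g is the central idempotent 1_g, and A_g = A 1_g.\<close>
definition Aid :: "('g \<Rightarrow> 'a::ring_1) \<Rightarrow> 'g \<Rightarrow> 'a set" where
  "Aid u g = (\<lambda>a. a * u g) ` UNIV"

definition ring_iso_betw :: "('a::ring_1 \<Rightarrow> 'a) \<Rightarrow> 'a set \<Rightarrow> 'a set \<Rightarrow> bool" where
  "ring_iso_betw f X Y \<longleftrightarrow> bij_betw f X Y \<and>
     (\<forall>x\<in>X. \<forall>y\<in>X. f (x + y) = f x + f y \<and> f (x * y) = f x * f y)"

definition unital_partial_action ::
  "'g groupoid \<Rightarrow> ('g \<Rightarrow> 'a::ring_1) \<Rightarrow> ('g \<Rightarrow> 'a \<Rightarrow> 'a) \<Rightarrow> bool" where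
  "unital_partial_action G u \<alpha> \<longleftrightarrow>
     (\<forall>g\<in>mor G. u g * u g = u g \<and> (\<forall>x. u g * x = x * u g)) \<and>
     (\<forall>g\<in>mor G. Aid u g \<subseteq> Aid u (tgt G g)) \<and>
     (\<forall>g\<in>mor G. ring_iso_betw (\<alpha> g) (Aid u (ginv G g)) (Aid u g)) \<and>
     (\<forall>e\<in>obj G. \<forall>x\<in>Aid u e. \<alpha> e x = x) \<and>
     (\<forall>g\<in>mor G. \<forall>h\<in>mor G. src G g = tgt G h \<longrightarrow>
        (\<forall>x\<in>Aid u (ginv G h). \<alpha> h x \<in> Aid u (ginv G g) \<inter> Aid u h \<longrightarrow>
            x \<in> Aid u (ginv G (cmp G g h)) \<and> \<alpha> g (\<alpha> h x) = \<alpha> (cmp G g h) x))"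

text \<open>Elements of A \<star> G are represented as functions f with f g \<in> A_g for g \<in> G
and f g = 0 outside G; f corresponds to the sum of (f g) \<delta>_g.\<close>

definition skew_carrier :: "'g groupoid \<Rightarrow> ('g \<Rightarrow> 'a::ring_1) \<Rightarrow> ('g \<Rightarrow> 'a) set" where
  "skew_carrier G u = {f. (\<forall>g\<in>mor G. f g \<in> Aid u g) \<and> (\<forall>g. g \<notin> mor G \<longrightarrow> f g = 0)}"

definition skew_add :: "('g \<Rightarrow> 'a::ring_1) \<Rightarrow> ('g \<Rightarrow> 'a) \<Rightarrow> ('g \<Rightarrow> 'a)" where
  "skew_add f h = (\<lambda>k. f k + h k)"

definition skew_zero :: "'g \<Rightarrow> 'a::ring_1" where
  "skew_zero = (\<lambda>k. 0)"

definition skew_mult ::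
  "'g groupoid \<Rightarrow> ('g \<Rightarrow> 'a::ring_1 \<Rightarrow> 'a) \<Rightarrow> ('g \<Rightarrow> 'a) \<Rightarrow> ('g \<Rightarrow> 'a) \<Rightarrow> ('g \<Rightarrow> 'a)" where
  "skew_mult G \<alpha> f h = (\<lambda>k. \<Sum>(g, g') \<in> {(g, g') \<in> mor G \<times> mor G. src G g = tgt G g' \<and> cmp G g g' = k}.
       \<alpha> g (\<alpha> (ginv G g) (f g) * h g'))"

definition skew_one :: "'g groupoid \<Rightarrow> ('g \<Rightarrow> 'a::ring_1) \<Rightarrow> ('g \<Rightarrow> 'a)" where
  "skew_one G u = (\<lambda>k. if k \<in> obj G then u k else 0)"

definition skew_emb :: "'g groupoid \<Rightarrow> ('g \<Rightarrow> 'a::ring_1) \<Rightarrow> 'a \<Rightarrow> ('g \<Rightarrow> 'a)" where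
  "skew_emb G u a = (\<lambda>k. if k \<in> obj G then a * u k else 0)"

text \<open>Tensor product S \<otimes>_R S: formal finite sums of pairs (free abelian group on
S \<times> S, elements as integer-valued functions) modulo the subgroup generated by the
biadditivity and R-balancedness relations.\<close>

definition ind :: "'s \<times> 's \<Rightarrow> ('s \<times> 's \<Rightarrow> int)" where
  "ind p = (\<lambda>q. if q = p then 1 else 0)"

inductive_set tens_zero ::
  "'s set \<Rightarrow> ('s \<Rightarrow> 's \<Rightarrow> 's) \<Rightarrow> ('s \<Rightarrow> 's \<Rightarrow> 's) \<Rightarrow> 's set \<Rightarrow> ('s \<times> 's \<Rightarrow> int) set"
  for S :: "'s set" and add :: "'s \<Rightarrow> 's \<Rightarrow> 's" and mul :: "'s \<Rightarrow> 's \<Rightarrow> 's" and R :: "'s set"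
where
  tz_zero: "(\<lambda>q. 0) \<in> tens_zero S add mul R"
| tz_left: "a \<in> S \<Longrightarrow> a' \<in> S \<Longrightarrow> b \<in> S \<Longrightarrow>
     (\<lambda>q. ind (add a a', b) q - ind (a, b) q - ind (a', b) q) \<in> tens_zero S add mul R"
| tz_right: "a \<in> S \<Longrightarrow> b \<in> S \<Longrightarrow> b' \<in> S \<Longrightarrow>
     (\<lambda>q. ind (a, add b b') q - ind (a, b) q - ind (a, b') q) \<in> tens_zero S add mul R"
| tz_bal: "a \<in> S \<Longrightarrow> r \<in> R \<Longrightarrow> b \<in> S \<Longrightarrow>
     (\<lambda>q. ind (mul a r, b) q - ind (a, mul r b) q) \<in> tens_zero S add mul R"
| tz_plus: "x \<in> tens_zero S add mul R \<Longrightarrow> y \<in> tens_zero S add mul R \<Longrightarrow>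
     (\<lambda>q. x q + y q) \<in> tens_zero S add mul R"
| tz_neg: "x \<in> tens_zero S add mul R \<Longrightarrow> (\<lambda>q. - x q) \<in> tens_zero S add mul R"

text \<open>Formal sum of a list of pairs (the element sum of x_k \<otimes> y_k).\<close>
definition formal :: "('s \<times> 's) list \<Rightarrow> ('s \<times> 's \<Rightarrow> int)" where
  "formal xs = (\<lambda>q. int (count_list xs q))"

definition tens_eq ::
  "'s set \<Rightarrow> ('s \<Rightarrow> 's \<Rightarrow> 's) \<Rightarrow> ('s \<Rightarrow> 's \<Rightarrow> 's) \<Rightarrow> 's set \<Rightarrow> ('s \<times> 's) list \<Rightarrow> ('s \<times> 's) list \<Rightarrow> bool" where
  "tens_eq S add mul R xs ys \<longleftrightarrow> (\<lambda>q. formal xs q - formal ys q) \<in> tens_zero S add mul R"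

text \<open>Separability of R \<subseteq> S (S a ring with carrier S, addition, multiplication, zero, one):
there is x = sum of x_k \<otimes> y_k in S \<otimes>_R S with m(x) = 1 and s x = x s for all s \<in> S.\<close>
definition separable_ext ::
  "'s set \<Rightarrow> ('s \<Rightarrow> 's \<Rightarrow> 's) \<Rightarrow> ('s \<Rightarrow> 's \<Rightarrow> 's) \<Rightarrow> 's \<Rightarrow> 's \<Rightarrow> 's set \<Rightarrow> bool" where
  "separable_ext S add mul zero one R \<longleftrightarrow>
     (\<exists>xs. set xs \<subseteq> S \<times> S \<and>
        foldr (\<lambda>(a, b) acc. add (mul a b) acc) xs zero = one \<and>
        (\<forall>s\<in>S. tens_eq S add mul R
                  (map (\<lambda>(a, b). (mul s a, b)) xs) (map (\<lambda>(a, b). (a, mul b s)) xs)))"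

definition center :: "'a::ring_1 set" where
  "center = {a. \<forall>b. a * b = b * a}"

definition trace_ij ::
  "'g groupoid \<Rightarrow> ('g \<Rightarrow> 'a::ring_1) \<Rightarrow> ('g \<Rightarrow> 'a \<Rightarrow> 'a) \<Rightarrow> 'g \<Rightarrow> 'g \<Rightarrow> 'a \<Rightarrow> 'a" where
  "trace_ij G u \<alpha> ei ej a = (\<Sum>g\<in>hom G ei ej. \<alpha> g (a * u (ginv G g)))"

definition trace_j ::
  "'g groupoid \<Rightarrow> ('g \<Rightarrow> 'a::ring_1) \<Rightarrow> ('g \<Rightarrow> 'a \<Rightarrow> 'a) \<Rightarrow> 'g \<Rightarrow> 'a \<Rightarrow> 'a" where
  "trace_j G u \<alpha> ej a = (\<Sum>ei\<in>obj G. trace_ij G u \<alpha> ei ej a)"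

end

theory Submission
  imports Defs
begin

locale pa =
  fixes G :: "'g groupoid" and u :: "'g \<Rightarrow> 'a::ring_1" and \<alpha> :: "'g \<Rightarrow> 'a \<Rightarrow> 'a"
  assumes grp: "is_groupoid G" and fin: "finite (mor G)"
    and upa: "unital_partial_action G u \<alpha>"
begin

abbreviation "M \<equiv> mor G"
abbreviation "Ob \<equiv> obj G"
abbreviation "sr \<equiv> src G"
abbreviation "tg \<equiv> tgt G"
abbreviation "cm \<equiv> cmp G"
abbreviation "iv \<equiv> ginv G"

lemma obj_mor[simp]: "e \<in> Ob \<Longrightarrow> e \<in> M" using grp unfolding is_groupoid_def by blast
lemma src_mem[simp]: "g \<in> M \<Longrightarrow> sr g \<in> Ob" using grp unfolding is_groupoid_def by blast
lemma tgt_mem[simp]: "g \<in> M \<Longrightarrow> tg g \<in> Ob" using grp unfolding is_groupoid_def by blast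
lemma src_obj[simp]: "e \<in> Ob \<Longrightarrow> sr e = e" using grp unfolding is_groupoid_def by blast
lemma tgt_obj[simp]: "e \<in> Ob \<Longrightarrow> tg e = e" using grp unfolding is_groupoid_def by blast
lemma cm_mem[simp]: "g \<in> M \<Longrightarrow> h \<in> M \<Longrightarrow> sr g = tg h \<Longrightarrow> cm g h \<in> M"
  using grp unfolding is_groupoid_def by blast
lemma cm_src[simp]: "g \<in> M \<Longrightarrow> h \<in> M \<Longrightarrow> sr g = tg h \<Longrightarrow> sr (cm g h) = sr h"
  using grp unfolding is_groupoid_def by blast
lemma cm_tgt[simp]: "g \<in> M \<Longrightarrow> h \<in> M \<Longrightarrow> sr g = tg h \<Longrightarrow> tg (cm g h) = tg g"
  using grp unfolding is_groupoid_def by blast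
lemma assoc: "f \<in> M \<Longrightarrow> g \<in> M \<Longrightarrow> h \<in> M \<Longrightarrow> sr f = tg g \<Longrightarrow> sr g = tg h \<Longrightarrow>
   cm (cm f g) h = cm f (cm g h)"
  using grp unfolding is_groupoid_def by blast
lemma runit[simp]: "g \<in> M \<Longrightarrow> cm g (sr g) = g" using grp unfolding is_groupoid_def by blast
lemma lunit[simp]: "g \<in> M \<Longrightarrow> cm (tg g) g = g" using grp unfolding is_groupoid_def by blast
lemma iv_mem[simp]: "g \<in> M \<Longrightarrow> iv g \<in> M" using grp unfolding is_groupoid_def by blast
lemma iv_src[simp]: "g \<in> M \<Longrightarrow> sr (iv g) = tg g" using grp unfolding is_groupoid_def by blast
lemma iv_tgt[simp]: "g \<in> M \<Longrightarrow> tg (iv g) = sr g" using grp unfolding is_groupoid_def by blast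
lemma iv_r[simp]: "g \<in> M \<Longrightarrow> cm g (iv g) = tg g" using grp unfolding is_groupoid_def by blast
lemma iv_l[simp]: "g \<in> M \<Longrightarrow> cm (iv g) g = sr g" using grp unfolding is_groupoid_def by blast

lemma runit': "g \<in> M \<Longrightarrow> e = sr g \<Longrightarrow> cm g e = g" by simp
lemma lunit': "g \<in> M \<Longrightarrow> e = tg g \<Longrightarrow> cm e g = g" by simp

lemma iv_unique: assumes "x \<in> M" "y \<in> M" "sr x = tg y" "cm x y = sr y" shows "x = iv y"
proof -
  have "x = cm x (tg y)" using assms runit by metis
  also have "\<dots> = cm x (cm y (iv y))" using assms by simp
  also have "\<dots> = cm (cm x y) (iv y)" by (rule assoc[symmetric]) (use assms in simp_all)
  also have "\<dots> = cm (sr y) (iv y)" using assms by simp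
  also have "\<dots> = iv y" using assms lunit[of "iv y"] by simp
  finally show ?thesis .
qed

lemma iv_iv[simp]: "g \<in> M \<Longrightarrow> iv (iv g) = g"
  using iv_unique[of g "iv g"] by simp

lemma iv_obj[simp]: "e \<in> Ob \<Longrightarrow> iv e = e"
  using iv_unique[of e e] by (metis obj_mor src_obj tgt_obj runit)

lemma iv_cm: assumes "g \<in> M" "h \<in> M" "sr g = tg h" shows "iv (cm g h) = cm (iv h) (iv g)"
proof -
  have "cm (cm (iv h) (iv g)) (cm g h) = cm (iv h) (cm (iv g) (cm g h))" using assms by (simp add: assoc)
  also have "\<dots> = cm (iv h) (cm (cm (iv g) g) h)" by (subst assoc) (use assms in simp_all)
  also have "\<dots> = cm (iv h) h" using assms lunit[of h] by simp
  also have "\<dots> = sr (cm g h)" using assms by simp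
  finally show ?thesis using assms by (intro iv_unique[symmetric]) simp_all
qed

lemma cancel_r: assumes "g \<in> M" "g0 \<in> M" "sr g = tg g0" shows "cm (cm g g0) (iv g0) = g"
  using assms by (subst assoc) (simp_all add: runit')
lemma cancel_l: assumes "g \<in> M" "g0 \<in> M" "sr g0 = tg g" shows "cm (iv g0) (cm g0 g) = g"
  using assms by (simp add: assoc[symmetric])

end


context pa begin

abbreviation "A g \<equiv> Aid u g"

lemma upa_u: "g \<in> M \<Longrightarrow> u g * u g = u g \<and> (\<forall>x. u g * x = x * u g)"
  using upa unfolding unital_partial_action_def by blast
lemma u_idem[simp]: "g \<in> M \<Longrightarrow> u g * u g = u g" using upa_u by blast
lemma u_central: "g \<in> M \<Longrightarrow> u g * x = x * u g" using upa_u by blast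

lemma Aid_iff: "g \<in> M \<Longrightarrow> x \<in> A g \<longleftrightarrow> x * u g = x"
proof
  assume g: "g \<in> M" and "x \<in> A g"
  then obtain a where "x = a * u g" unfolding Aid_def by auto
  then show "x * u g = x" using g by (simp add: mult.assoc)
next
  assume "x * u g = x" then show "x \<in> A g" unfolding Aid_def by (metis rangeI)
qed

lemma A_sub: "g \<in> M \<Longrightarrow> A g \<subseteq> A (tg g)"
  using upa unfolding unital_partial_action_def by blast

lemma iso: "g \<in> M \<Longrightarrow> ring_iso_betw (\<alpha> g) (A (iv g)) (A g)"
  using upa unfolding unital_partial_action_def by blast

lemma al_id: "e \<in> Ob \<Longrightarrow> x \<in> A e \<Longrightarrow> \<alpha> e x = x"
  using upa unfolding unital_partial_action_def by blast

lemma act: "g \<in> M \<Longrightarrow> h \<in> M \<Longrightarrow> sr g = tg h \<Longrightarrow> x \<in> A (iv h) \<Longrightarrow>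
   \<alpha> h x \<in> A (iv g) \<Longrightarrow> \<alpha> h x \<in> A h \<Longrightarrow>
   x \<in> A (iv (cm g h)) \<and> \<alpha> g (\<alpha> h x) = \<alpha> (cm g h) x"
  using upa unfolding unital_partial_action_def by blast

lemma al_mem: "g \<in> M \<Longrightarrow> x \<in> A (iv g) \<Longrightarrow> \<alpha> g x \<in> A g"
  using iso unfolding ring_iso_betw_def bij_betw_def by blast
lemma al_add: "g \<in> M \<Longrightarrow> x \<in> A (iv g) \<Longrightarrow> y \<in> A (iv g) \<Longrightarrow> \<alpha> g (x + y) = \<alpha> g x + \<alpha> g y"
  using iso unfolding ring_iso_betw_def by blast
lemma al_mult: "g \<in> M \<Longrightarrow> x \<in> A (iv g) \<Longrightarrow> y \<in> A (iv g) \<Longrightarrow> \<alpha> g (x * y) = \<alpha> g x * \<alpha> g y"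
  using iso unfolding ring_iso_betw_def by blast
lemma al_surj: assumes "g \<in> M" "y \<in> A g" shows "\<exists>x\<in>A (iv g). \<alpha> g x = y"
proof -
  have "\<alpha> g ` A (iv g) = A g" using iso[OF assms(1)] unfolding ring_iso_betw_def bij_betw_def by blast
  then show ?thesis using assms(2) by (metis imageE)
qed

lemma A_mult_r: assumes "g \<in> M" "x \<in> A g" shows "x * y \<in> A g"
proof -
  have "x * u g = x" using assms Aid_iff by blast
  then have "(x * y) * u g = x * y"
    by (metis assms(1) mult.assoc u_central)
  then show ?thesis using assms Aid_iff by blast
qed
lemma A_mult_l: "g \<in> M \<Longrightarrow> x \<in> A g \<Longrightarrow> y * x \<in> A g"
  by (simp add: Aid_iff mult.assoc)
lemma A_zero[simp]: "g \<in> M \<Longrightarrow> 0 \<in> A g" by (simp add: Aid_iff)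
lemma A_add: "g \<in> M \<Longrightarrow> x \<in> A g \<Longrightarrow> y \<in> A g \<Longrightarrow> x + y \<in> A g"
  by (simp add: Aid_iff distrib_right)
lemma A_neg: "g \<in> M \<Longrightarrow> x \<in> A g \<Longrightarrow> - x \<in> A g"
  by (simp add: Aid_iff)
lemma A_diff: "g \<in> M \<Longrightarrow> x \<in> A g \<Longrightarrow> y \<in> A g \<Longrightarrow> x - y \<in> A g"
  by (simp add: Aid_iff left_diff_distrib)
lemma A_u[simp]: "g \<in> M \<Longrightarrow> u g \<in> A g" by (simp add: Aid_iff)
lemma A_xu[simp]: "g \<in> M \<Longrightarrow> x * u g \<in> A g" by (simp add: A_mult_l)
lemma A_ux[simp]: "g \<in> M \<Longrightarrow> u g * x \<in> A g" by (simp add: A_mult_r)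
lemma A_sum: "finite I \<Longrightarrow> g \<in> M \<Longrightarrow> (\<And>i. i \<in> I \<Longrightarrow> f i \<in> A g) \<Longrightarrow> (\<Sum>i\<in>I. f i) \<in> A g"
  by (induction I rule: finite_induct) (auto intro: A_add)
lemma A_sum_list: "g \<in> M \<Longrightarrow> (\<And>x. x \<in> set xs \<Longrightarrow> f x \<in> A g) \<Longrightarrow> (\<Sum>x\<leftarrow>xs. f x) \<in> A g"
  by (induction xs) (auto intro: A_add)

lemma Au: "g \<in> M \<Longrightarrow> x \<in> A g \<Longrightarrow> x * u g = x" by (simp add: Aid_iff)
lemma uA: "g \<in> M \<Longrightarrow> x \<in> A g \<Longrightarrow> u g * x = x" by (simp add: Aid_iff u_central)

lemma u_tgt: "g \<in> M \<Longrightarrow> u g * u (tg g) = u g"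
  using A_sub[of g] A_u[of g] by (simp add: Aid_iff subset_iff)
lemma u_tgt': "g \<in> M \<Longrightarrow> u (tg g) * u g = u g"
  using u_tgt[of g] u_central[of g "u (tg g)"] by simp
lemma u_src: "g \<in> M \<Longrightarrow> u (iv g) * u (sr g) = u (iv g)"
  using u_tgt[of "iv g"] by simp
lemma A_tgt: "g \<in> M \<Longrightarrow> x \<in> A g \<Longrightarrow> x \<in> A (tg g)" using A_sub by blast

lemma al_zero[simp]: "g \<in> M \<Longrightarrow> \<alpha> g 0 = 0"
  using al_add[of g 0 0] by simp

lemma al_neg: assumes "g \<in> M" "x \<in> A (iv g)" shows "\<alpha> g (- x) = - \<alpha> g x"
proof -
  have "\<alpha> g x + \<alpha> g (- x) = 0" using al_add[of g x "-x"] A_neg[of "iv g" x] assms by simp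
  then show ?thesis by (metis add.inverse_unique)
qed

lemma al_sum: "finite I \<Longrightarrow> g \<in> M \<Longrightarrow> (\<And>i. i \<in> I \<Longrightarrow> f i \<in> A (iv g)) \<Longrightarrow>
  \<alpha> g (\<Sum>i\<in>I. f i) = (\<Sum>i\<in>I. \<alpha> g (f i))"
  by (induction I rule: finite_induct) (auto simp: al_add A_sum)
lemma al_sum_list: "g \<in> M \<Longrightarrow> (\<And>x. x \<in> set xs \<Longrightarrow> f x \<in> A (iv g)) \<Longrightarrow>
  \<alpha> g (\<Sum>x\<leftarrow>xs. f x) = (\<Sum>x\<leftarrow>xs. \<alpha> g (f x))"
  by (induction xs) (auto simp: al_add A_sum_list)

lemma al_inv: assumes "g \<in> M" "x \<in> A (iv g)" shows "\<alpha> (iv g) (\<alpha> g x) = x"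
proof -
  have m: "\<alpha> g x \<in> A g" using assms al_mem by blast
  have "x \<in> A (iv (cm (iv g) g)) \<and> \<alpha> (iv g) (\<alpha> g x) = \<alpha> (cm (iv g) g) x"
    using act[of "iv g" g x] assms m by simp
  moreover have "x \<in> A (sr g)" using A_tgt[of "iv g" x] assms by simp
  ultimately show ?thesis using assms by (simp add: al_id)
qed

lemma al_inv': assumes "g \<in> M" "y \<in> A g" shows "\<alpha> g (\<alpha> (iv g) y) = y"
  using al_inv[of "iv g" y] assms by simp

lemma al_inv_mem: "g \<in> M \<Longrightarrow> y \<in> A g \<Longrightarrow> \<alpha> (iv g) y \<in> A (iv g)"
  using al_mem[of "iv g" y] by simp

lemma al_u: assumes g: "g \<in> M" shows "\<alpha> g (u (iv g)) = u g"
proof -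
  let ?y = "\<alpha> (iv g) (u g)"
  have y: "?y \<in> A (iv g)" using g al_inv_mem by simp
  have "u g = \<alpha> g ?y" using g by (simp add: al_inv')
  also have "\<dots> = \<alpha> g (u (iv g) * ?y)" using y g by (simp add: uA)
  also have "\<dots> = \<alpha> g (u (iv g)) * u g" using g y by (simp add: al_mult al_inv')
  also have "\<dots> = \<alpha> g (u (iv g))" using g by (simp add: Au al_mem)
  finally show ?thesis by simp
qed

lemma al_mult_gen: assumes "g \<in> M" "x \<in> A (iv g)" shows "\<alpha> g (x * y) = \<alpha> g x * \<alpha> g (y * u (iv g))"
proof -
  have "x * y = x * (y * u (iv g))" using assms
    by (metis Au iv_mem mult.assoc u_central)
  then show ?thesis using assms by (simp add: al_mult)
qed

lemma al_mult_gen2: assumes "g \<in> M" "y \<in> A (iv g)" shows "\<alpha> g (x * y) = \<alpha> g (x * u (iv g)) * \<alpha> g y"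
proof -
  have "x * y = (x * u (iv g)) * y" using assms
    by (metis uA iv_mem mult.assoc)
  then show ?thesis using assms by (simp add: al_mult)
qed

lemma incl: assumes g: "g \<in> M" and h: "h \<in> M" and c: "sr g = tg h"
  and x1: "x \<in> A (iv g)" and x2: "x \<in> A h" shows "\<alpha> g x \<in> A (cm g h)"
proof -
  let ?y = "\<alpha> g x"
  have y: "?y \<in> A g" using g x1 al_mem by blast
  have "?y \<in> A (iv (cm (iv h) (iv g))) \<and> \<alpha> (iv h) (\<alpha> (iv g) ?y) = \<alpha> (cm (iv h) (iv g)) ?y"
    using act[of "iv h" "iv g" ?y] g h c y x1 x2 by (simp add: al_inv)
  then show ?thesis using g h c by (simp add: iv_cm)
qed

lemma pa3: assumes g: "g \<in> M" and h: "h \<in> M" and c: "sr g = tg h"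
  shows "\<alpha> g (u (iv g) * u h) = u g * u (cm g h)"
proof -
  let ?e = "u (iv g) * u h" and ?f = "u g * u (cm g h)"
  have gh: "cm g h \<in> M" using assms by simp
  have e1: "?e \<in> A (iv g)" "?e \<in> A h" using g h by (simp_all add: A_mult_r A_mult_l)
  have f1: "?f \<in> A g" "?f \<in> A (cm g h)" using g gh by (simp_all add: A_mult_r A_mult_l)
  have ae: "\<alpha> g ?e \<in> A g" "\<alpha> g ?e \<in> A (cm g h)" using e1 g h c al_mem incl by auto
  let ?z = "\<alpha> (iv g) ?f"
  have z1: "?z \<in> A (iv g)" using g f1 al_inv_mem by blast
  have z2: "?z \<in> A h"
    using incl[of "iv g" "cm g h" ?f] g h c gh f1 cancel_l[of h g] by simp
  have "?f = \<alpha> g ?z" using g f1 by (simp add: al_inv')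
  also have "\<dots> = \<alpha> g (?z * ?e)" using z1 z2 g h
    by (metis Au iv_mem mult.assoc)
  also have "\<dots> = ?f * \<alpha> g ?e" using g z1 e1 by (simp add: al_mult al_inv' f1)
  also have "\<dots> = \<alpha> g ?e" using ae g gh by (metis Au mult.assoc u_central)
  finally show ?thesis by simp
qed

end


lemma single_sum: assumes "finite X" "x0 \<in> X" "\<And>x. x \<in> X \<Longrightarrow> x \<noteq> x0 \<Longrightarrow> f x = 0"
  shows "sum f X = f x0"
proof -
  have "sum f X = f x0 + sum f (X - {x0})" using assms by (simp add: sum.remove)
  also have "sum f (X - {x0}) = 0" using assms by (intro sum.neutral) auto
  finally show ?thesis by simp
qed

context pa begin

abbreviation "S \<equiv> skew_carrier G u"
abbreviation "mul \<equiv> skew_mult G \<alpha>"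
abbreviation "emb \<equiv> skew_emb G u"
definition "v c g = (\<lambda>k. if k = g then c * u g else 0)"
definition "II k = {(g, g'). (g, g') \<in> M \<times> M \<and> sr g = tg g' \<and> cm g g' = k}"

lemma mul_def': "mul f h k = (\<Sum>(g, g') \<in> II k. \<alpha> g (\<alpha> (iv g) (f g) * h g'))"
  unfolding skew_mult_def II_def by simp

lemma II_fin[simp]: "finite (II k)"
  by (rule finite_subset[of _ "M \<times> M"]) (auto simp: II_def fin)

lemma II_empty: "k \<notin> M \<Longrightarrow> II k = {}"
  unfolding II_def by auto

lemma S_iff: "f \<in> S \<longleftrightarrow> (\<forall>g\<in>M. f g \<in> A g) \<and> (\<forall>g. g \<notin> M \<longrightarrow> f g = 0)"
  unfolding skew_carrier_def by simp

lemma S_in: "f \<in> S \<Longrightarrow> g \<in> M \<Longrightarrow> f g \<in> A g" by (simp add: S_iff)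
lemma S_out: "f \<in> S \<Longrightarrow> g \<notin> M \<Longrightarrow> f g = 0" by (simp add: S_iff)

lemma mul_closed: assumes f: "f \<in> S" and h: "h \<in> S" shows "mul f h \<in> S"
  unfolding S_iff
proof (intro conjI ballI allI impI)
  fix k assume k: "k \<in> M"
  show "mul f h k \<in> A k" unfolding mul_def'
  proof (rule A_sum[OF II_fin k])
    fix x assume "x \<in> II k"
    then obtain g g' where x: "x = (g, g')" "g \<in> M" "g' \<in> M" "sr g = tg g'" "cm g g' = k"
      unfolding II_def by auto
    let ?y = "\<alpha> (iv g) (f g)"
    have y: "?y \<in> A (iv g)" using x f by (simp add: al_inv_mem S_in)
    have "?y * h g' \<in> A (iv g)" "?y * h g' \<in> A g'" using y x h by (simp_all add: A_mult_r A_mult_l S_in)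
    then have "\<alpha> g (?y * h g') \<in> A (cm g g')" using x by (intro incl) auto
    then show "(case x of (g, g') \<Rightarrow> \<alpha> g (\<alpha> (iv g) (f g) * h g')) \<in> A k" using x by simp
  qed
next
  fix k assume "k \<notin> M" then show "mul f h k = 0" unfolding mul_def' by (simp add: II_empty)
qed

lemma v_S: "g \<in> M \<Longrightarrow> v c g \<in> S" unfolding S_iff v_def by auto

lemma v_at: "v c g k = (if k = g then c * u g else 0)" unfolding v_def by simp

lemma mul_v_right: assumes g0: "g0 \<in> M"
  shows "mul s (v c g0) k = (if k \<in> M \<and> sr k = sr g0 then
     \<alpha> (cm k (iv g0)) (\<alpha> (iv (cm k (iv g0))) (s (cm k (iv g0))) * (c * u g0)) else 0)"
proof (cases "k \<in> M \<and> sr k = sr g0")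
  case True
  let ?g = "cm k (iv g0)"
  have g: "?g \<in> M" "sr ?g = tg g0" "cm ?g g0 = k" using True g0 cancel_r[of k "iv g0"] by auto
  have "mul s (v c g0) k = (case (?g, g0) of (g, g') \<Rightarrow> \<alpha> g (\<alpha> (iv g) (s g) * v c g0 g'))"
    unfolding mul_def'
  proof (rule single_sum)
    show "(?g, g0) \<in> II k" using g g0 unfolding II_def by auto
    fix x assume x: "x \<in> II k" "x \<noteq> (?g, g0)"
    then obtain g g' where xx: "x = (g, g')" "g \<in> M" "g' \<in> M" "sr g = tg g'" "cm g g' = k"
      unfolding II_def by auto
    show "(case x of (g, g') \<Rightarrow> \<alpha> g (\<alpha> (iv g) (s g) * v c g0 g')) = 0"
    proof (cases "g' = g0")
      case True
      then have "g = ?g" using xx cancel_r[of g g0] g0 by simp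
      then show ?thesis using x xx True by simp
    next
      case False then show ?thesis using xx by (simp add: v_at)
    qed
  qed simp
  then show ?thesis using True g by (simp add: v_at)
next
  case False
  have "mul s (v c g0) k = 0" unfolding mul_def'
  proof (rule sum.neutral, intro ballI)
    fix x assume "x \<in> II k"
    then obtain g g' where xx: "x = (g, g')" "g \<in> M" "g' \<in> M" "sr g = tg g'" "cm g g' = k"
      unfolding II_def by auto
    have "g' \<noteq> g0" using False xx by auto
    then show "(case x of (g, g') \<Rightarrow> \<alpha> g (\<alpha> (iv g) (s g) * v c g0 g')) = 0" using xx by (simp add: v_at)
  qed
  then show ?thesis by (simp only: if_not_P[OF False])
qed

lemma mul_v_left: assumes g0: "g0 \<in> M"
  shows "mul (v c g0) t k = (if k \<in> M \<and> tg k = tg g0 then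
     \<alpha> g0 (\<alpha> (iv g0) (c * u g0) * t (cm (iv g0) k)) else 0)"
proof (cases "k \<in> M \<and> tg k = tg g0")
  case True
  let ?g = "cm (iv g0) k"
  have g: "?g \<in> M" "sr g0 = tg ?g" "cm g0 ?g = k" using True g0 cancel_l[of k "iv g0"] by auto
  have "mul (v c g0) t k = (case (g0, ?g) of (g, g') \<Rightarrow> \<alpha> g (\<alpha> (iv g) (v c g0 g) * t g'))"
    unfolding mul_def'
  proof (rule single_sum)
    show "(g0, ?g) \<in> II k" using g g0 unfolding II_def by auto
    fix x assume x: "x \<in> II k" "x \<noteq> (g0, ?g)"
    then obtain g g' where xx: "x = (g, g')" "g \<in> M" "g' \<in> M" "sr g = tg g'" "cm g g' = k"
      unfolding II_def by auto
    show "(case x of (g, g') \<Rightarrow> \<alpha> g (\<alpha> (iv g) (v c g0 g) * t g')) = 0"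
    proof (cases "g = g0")
      case True
      then have "g' = ?g" using xx cancel_l[of g' g0] g0 by simp
      then show ?thesis using x xx True by simp
    next
      case False then show ?thesis using xx by (simp add: v_at)
    qed
  qed simp
  then show ?thesis using True g by (simp add: v_at)
next
  case False
  have "mul (v c g0) t k = 0" unfolding mul_def'
  proof (rule sum.neutral, intro ballI)
    fix x assume "x \<in> II k"
    then obtain g g' where xx: "x = (g, g')" "g \<in> M" "g' \<in> M" "sr g = tg g'" "cm g g' = k"
      unfolding II_def by auto
    have "g \<noteq> g0" using False xx by auto
    then show "(case x of (g, g') \<Rightarrow> \<alpha> g (\<alpha> (iv g) (v c g0 g) * t g')) = 0" using xx by (simp add: v_at)
  qed
  then show ?thesis by (simp only: if_not_P[OF False])
qed

lemma emb_at: "emb r k = (if k \<in> Ob then r * u k else 0)" unfolding skew_emb_def by simp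

lemma mul_emb_right: assumes a: "a \<in> S" shows "mul a (emb r) p = a p * \<alpha> p (r * u (iv p))"
proof (cases "p \<in> M")
  case False then show ?thesis using a by (simp add: mul_def' II_empty S_out)
next
  case p: True
  have "mul a (emb r) p = (case (p, sr p) of (g, g') \<Rightarrow> \<alpha> g (\<alpha> (iv g) (a g) * emb r g'))"
    unfolding mul_def'
  proof (rule single_sum)
    show "(p, sr p) \<in> II p" using p unfolding II_def by auto
    fix x assume x: "x \<in> II p" "x \<noteq> (p, sr p)"
    then obtain g g' where xx: "x = (g, g')" "g \<in> M" "g' \<in> M" "sr g = tg g'" "cm g g' = p"
      unfolding II_def by auto
    show "(case x of (g, g') \<Rightarrow> \<alpha> g (\<alpha> (iv g) (a g) * emb r g')) = 0"
    proof (cases "g' \<in> Ob")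
      case True
      then have "g' = sr g" using xx by simp
      then have "g = p" using xx runit[of g] by auto
      then show ?thesis using x xx \<open>g' = sr g\<close> by simp
    next
      case False then show ?thesis using xx by (simp add: emb_at)
    qed
  qed simp
  also have "\<dots> = \<alpha> p (\<alpha> (iv p) (a p) * (r * u (sr p)))" using p by (simp add: emb_at)
  also have "\<dots> = \<alpha> p (\<alpha> (iv p) (a p)) * \<alpha> p (r * u (sr p) * u (iv p))"
    using p a by (simp add: al_mult_gen al_inv_mem S_in)
  also have "r * u (sr p) * u (iv p) = r * u (iv p)"
    using p u_src[of p] u_central[of "iv p" "u (sr p)"] by (simp add: mult.assoc)
  finally show ?thesis using p a by (simp add: al_inv' S_in)
qed

lemma mul_emb_left: assumes b: "b \<in> S" shows "mul (emb r) b q = r * b q"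
proof (cases "q \<in> M")
  case False then show ?thesis using b by (simp add: mul_def' II_empty S_out)
next
  case q: True
  have "mul (emb r) b q = (case (tg q, q) of (g, g') \<Rightarrow> \<alpha> g (\<alpha> (iv g) (emb r g) * b g'))"
    unfolding mul_def'
  proof (rule single_sum)
    show "(tg q, q) \<in> II q" using q unfolding II_def by auto
    fix x assume x: "x \<in> II q" "x \<noteq> (tg q, q)"
    then obtain g g' where xx: "x = (g, g')" "g \<in> M" "g' \<in> M" "sr g = tg g'" "cm g g' = q"
      unfolding II_def by auto
    show "(case x of (g, g') \<Rightarrow> \<alpha> g (\<alpha> (iv g) (emb r g) * b g')) = 0"
    proof (cases "g \<in> Ob")
      case True
      then have "g = tg g'" using xx by simp
      then have "g' = q" using xx by simp
      then show ?thesis using x xx \<open>g = tg g'\<close> by simp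
    next
      case False then show ?thesis using xx by (simp add: emb_at)
    qed
  qed simp
  also have "\<dots> = r * u (tg q) * b q"
    using q b by (simp add: emb_at al_id A_mult_r S_in)
  also have "\<dots> = r * b q" using q b A_tgt[of q "b q"] uA[of "tg q" "b q"] S_in[of b q]
    by (simp add: mult.assoc)
  finally show ?thesis .
qed

lemma mul_obj: assumes s: "s \<in> S" and t: "t \<in> S" and j: "j \<in> Ob"
  shows "mul s t j = (\<Sum>g\<in>{g\<in>M. tg g = j}. s g * \<alpha> g (t (iv g) * u (iv g)))"
proof -
  have bij: "bij_betw (\<lambda>g. (g, iv g)) {g\<in>M. tg g = j} (II j)"
    unfolding bij_betw_def
  proof
    show "inj_on (\<lambda>g. (g, iv g)) {g \<in> M. tg g = j}" by (auto simp: inj_on_def)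
    show "(\<lambda>g. (g, iv g)) ` {g \<in> M. tg g = j} = II j"
    proof
      show "(\<lambda>g. (g, iv g)) ` {g \<in> M. tg g = j} \<subseteq> II j" unfolding II_def by auto
      show "II j \<subseteq> (\<lambda>g. (g, iv g)) ` {g \<in> M. tg g = j}"
      proof
        fix x assume "x \<in> II j"
        then obtain g g' where xx: "x = (g, g')" "g \<in> M" "g' \<in> M" "sr g = tg g'" "cm g g' = j"
          unfolding II_def by auto
        have tj: "tg g = j" using xx j cm_tgt[of g g'] tgt_obj[of j] by simp
        have "g' = cm (iv g) (cm g g')" using cancel_l[of g' g] xx by simp
        also have "\<dots> = cm (iv g) (tg g)" using xx tj by simp
        also have "\<dots> = iv g" using xx runit'[of "iv g" "tg g"] by simp
        finally have "g' = iv g" .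
        moreover note tj
        ultimately show "x \<in> (\<lambda>g. (g, iv g)) ` {g \<in> M. tg g = j}" using xx by auto
      qed
    qed
  qed
  have "mul s t j = (\<Sum>g\<in>{g\<in>M. tg g = j}. \<alpha> g (\<alpha> (iv g) (s g) * t (iv g)))"
    unfolding mul_def' using sum.reindex_bij_betw[OF bij, of "\<lambda>(g, g'). \<alpha> g (\<alpha> (iv g) (s g) * t g')"]
    by simp
  also have "\<dots> = (\<Sum>g\<in>{g\<in>M. tg g = j}. s g * \<alpha> g (t (iv g) * u (iv g)))"
    using s by (intro sum.cong) (auto simp: al_mult_gen al_inv_mem al_inv' S_in)
  finally show ?thesis .
qed

lemma decomp: assumes s: "s \<in> S" shows "s = (\<lambda>k. \<Sum>p\<in>M. v (s p) p k)"
proof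
  fix k show "s k = (\<Sum>p\<in>M. v (s p) p k)"
  proof (cases "k \<in> M")
    case True
    have "(\<Sum>p\<in>M. v (s p) p k) = v (s k) k k" by (rule single_sum) (auto simp: fin True v_at)
    then show ?thesis using True s by (simp add: v_at Au S_in)
  next
    case False then show ?thesis using s by (auto simp: v_at S_out intro!: sum.neutral)
  qed
qed

end


section \<open>generic tensor facts\<close>

definition supp :: "('s \<Rightarrow> int) \<Rightarrow> 's set" where "supp z = {q. z q \<noteq> 0}"
definition Lin :: "('s \<Rightarrow> 'a::ring_1) \<Rightarrow> ('s \<Rightarrow> int) \<Rightarrow> 'a" where
  "Lin P z = (\<Sum>q\<in>supp z. of_int (z q) * P q)"

lemma Lin_sup: assumes "finite U" "supp z \<subseteq> U" shows "Lin P z = (\<Sum>q\<in>U. of_int (z q) * P q)"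
  unfolding Lin_def by (rule sum.mono_neutral_left) (use assms in \<open>auto simp: supp_def\<close>)

lemma sum_ind: assumes "finite U" "x \<in> U" shows "(\<Sum>q\<in>U. of_int (ind x q) * P q) = P x"
proof -
  have "(\<Sum>q\<in>U. of_int (ind x q) * P q) = of_int (ind x x) * P x"
    by (rule single_sum) (use assms in \<open>auto simp: ind_def\<close>)
  then show ?thesis by (simp add: ind_def)
qed

lemma tz_Lin:
  assumes left: "\<And>a a' b. a \<in> S \<Longrightarrow> a' \<in> S \<Longrightarrow> b \<in> S \<Longrightarrow> P (add a a', b) = P (a, b) + P (a', b)"
    and right: "\<And>a b b'. a \<in> S \<Longrightarrow> b \<in> S \<Longrightarrow> b' \<in> S \<Longrightarrow> P (a, add b b') = P (a, b) + P (a, b')"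
    and bal: "\<And>a r b. a \<in> S \<Longrightarrow> r \<in> R \<Longrightarrow> b \<in> S \<Longrightarrow> P (mul a r, b) = P (a, mul r b)"
    and z: "z \<in> tens_zero S add mul R"
  shows "finite (supp z) \<and> Lin P z = (0::'a::ring_1)"
  using z
proof (induction rule: tens_zero.induct)
  case tz_zero
  then show ?case by (simp add: supp_def Lin_def)
next
  case (tz_left a a' b)
  let ?U = "{(add a a', b), (a, b), (a', b)}"
  have su: "supp (\<lambda>q. ind (add a a', b) q - ind (a, b) q - ind (a', b) q) \<subseteq> ?U"
    by (auto simp: supp_def ind_def)
  have "Lin P (\<lambda>q. ind (add a a', b) q - ind (a, b) q - ind (a', b) q)
     = (\<Sum>q\<in>?U. of_int (ind (add a a', b) q) * P q) - (\<Sum>q\<in>?U. of_int (ind (a, b) q) * P q)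
       - (\<Sum>q\<in>?U. of_int (ind (a', b) q) * P q)"
    by (subst Lin_sup[OF _ su]) (simp_all add: left_diff_distrib sum_subtractf)
  also have "\<dots> = 0" using tz_left by (simp add: sum_ind left)
  finally show ?case using su finite_subset by auto
next
  case (tz_right a b b')
  let ?U = "{(a, add b b'), (a, b), (a, b')}"
  have su: "supp (\<lambda>q. ind (a, add b b') q - ind (a, b) q - ind (a, b') q) \<subseteq> ?U"
    by (auto simp: supp_def ind_def)
  have "Lin P (\<lambda>q. ind (a, add b b') q - ind (a, b) q - ind (a, b') q)
     = (\<Sum>q\<in>?U. of_int (ind (a, add b b') q) * P q) - (\<Sum>q\<in>?U. of_int (ind (a, b) q) * P q)
       - (\<Sum>q\<in>?U. of_int (ind (a, b') q) * P q)"
    by (subst Lin_sup[OF _ su]) (simp_all add: left_diff_distrib sum_subtractf)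
  also have "\<dots> = 0" using tz_right by (simp add: sum_ind right)
  finally show ?case using su finite_subset by auto
next
  case (tz_bal a r b)
  let ?U = "{(mul a r, b), (a, mul r b)}"
  have su: "supp (\<lambda>q. ind (mul a r, b) q - ind (a, mul r b) q) \<subseteq> ?U"
    by (auto simp: supp_def ind_def)
  have "Lin P (\<lambda>q. ind (mul a r, b) q - ind (a, mul r b) q)
     = (\<Sum>q\<in>?U. of_int (ind (mul a r, b) q) * P q) - (\<Sum>q\<in>?U. of_int (ind (a, mul r b) q) * P q)"
    by (subst Lin_sup[OF _ su]) (simp_all add: left_diff_distrib sum_subtractf)
  also have "\<dots> = 0" using tz_bal by (simp add: sum_ind bal)
  finally show ?case using su finite_subset by auto
next
  case (tz_plus x y)
  let ?U = "supp x \<union> supp y"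
  have su: "supp (\<lambda>q. x q + y q) \<subseteq> ?U" by (auto simp: supp_def)
  have fu: "finite ?U" using tz_plus by simp
  have "Lin P (\<lambda>q. x q + y q) = (\<Sum>q\<in>?U. of_int (x q) * P q) + (\<Sum>q\<in>?U. of_int (y q) * P q)"
    by (subst Lin_sup[OF fu su]) (simp add: distrib_right sum.distrib)
  also have "\<dots> = Lin P x + Lin P y"
    using fu by (simp add: Lin_sup[symmetric])
  finally show ?case using tz_plus su fu finite_subset by auto
next
  case (tz_neg x)
  have su: "supp (\<lambda>q. - x q) = supp x" by (auto simp: supp_def)
  have "Lin P (\<lambda>q. - x q) = - Lin P x" unfolding Lin_def su by (simp add: sum_negf)
  then show ?case using tz_neg su by simp
qed

lemma sum_formal: assumes "finite U" "set L \<subseteq> U"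
  shows "(\<Sum>q\<in>U. of_int (formal L q) * P q) = (\<Sum>x\<leftarrow>L. (P x :: 'a::ring_1))"
  using assms(2)
proof (induction L)
  case Nil then show ?case by (simp add: formal_def)
next
  case (Cons x L)
  have e: "formal (x # L) = (\<lambda>q. ind x q + formal L q)"
    by (rule ext) (simp add: formal_def ind_def)
  have "(\<Sum>q\<in>U. of_int (formal (x # L) q) * P q)
     = (\<Sum>q\<in>U. of_int (ind x q) * P q) + (\<Sum>q\<in>U. of_int (formal L q) * P q)"
    unfolding e by (simp add: distrib_right sum.distrib)
  then show ?case using Cons assms(1) by (simp add: sum_ind)
qed

lemma tens_eq_Lin:
  assumes left: "\<And>a a' b. a \<in> S \<Longrightarrow> a' \<in> S \<Longrightarrow> b \<in> S \<Longrightarrow> P (add a a', b) = P (a, b) + P (a', b)"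
    and right: "\<And>a b b'. a \<in> S \<Longrightarrow> b \<in> S \<Longrightarrow> b' \<in> S \<Longrightarrow> P (a, add b b') = P (a, b) + P (a, b')"
    and bal: "\<And>a r b. a \<in> S \<Longrightarrow> r \<in> R \<Longrightarrow> b \<in> S \<Longrightarrow> P (mul a r, b) = P (a, mul r b)"
    and t: "tens_eq S add mul R L L'"
  shows "(\<Sum>x\<leftarrow>L. (P x :: 'a::ring_1)) = (\<Sum>x\<leftarrow>L'. P x)"
proof -
  let ?z = "\<lambda>q. formal L q - formal L' q"
  have "Lin P ?z = 0" using tz_Lin[OF left right bal] t unfolding tens_eq_def by blast
  moreover have "supp ?z \<subseteq> set L \<union> set L'"
    by (auto simp: supp_def formal_def count_list_0_iff)
  ultimately have "(\<Sum>q\<in>set L \<union> set L'. of_int (?z q) * P q) = 0"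
    using Lin_sup[of "set L \<union> set L'" ?z P] by simp
  then show ?thesis
    by (simp add: left_diff_distrib sum_subtractf sum_formal)
qed

definition teq where "teq S add mul R X Y \<longleftrightarrow> (\<lambda>q. X q - Y q) \<in> tens_zero S add mul R"

lemma teq_refl: "teq S add mul R X X"
  unfolding teq_def using tens_zero.tz_zero by simp

lemma teq_sym: "teq S add mul R X Y \<Longrightarrow> teq S add mul R Y X"
  unfolding teq_def using tens_zero.tz_neg by fastforce

lemma teq_add: "teq S add mul R X Y \<Longrightarrow> teq S add mul R X' Y' \<Longrightarrow>
   teq S add mul R (\<lambda>q. X q + X' q) (\<lambda>q. Y q + Y' q)"
  unfolding teq_def
proof -
  assume "(\<lambda>q. X q - Y q) \<in> tens_zero S add mul R" "(\<lambda>q. X' q - Y' q) \<in> tens_zero S add mul R"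
  then have "(\<lambda>q. (X q - Y q) + (X' q - Y' q)) \<in> tens_zero S add mul R" by (rule tens_zero.tz_plus)
  moreover have "(\<lambda>q. (X q - Y q) + (X' q - Y' q)) = (\<lambda>q. X q + X' q - (Y q + Y' q))" by auto
  ultimately show "(\<lambda>q. X q + X' q - (Y q + Y' q)) \<in> tens_zero S add mul R" by simp
qed

lemma teq_trans: "teq S add mul R X Y \<Longrightarrow> teq S add mul R Y Z \<Longrightarrow> teq S add mul R X Z"
  unfolding teq_def
proof -
  assume "(\<lambda>q. X q - Y q) \<in> tens_zero S add mul R" "(\<lambda>q. Y q - Z q) \<in> tens_zero S add mul R"
  then have "(\<lambda>q. (X q - Y q) + (Y q - Z q)) \<in> tens_zero S add mul R" by (rule tens_zero.tz_plus)
  moreover have "(\<lambda>q. (X q - Y q) + (Y q - Z q)) = (\<lambda>q. X q - Z q)" by auto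
  ultimately show "(\<lambda>q. X q - Z q) \<in> tens_zero S add mul R" by simp
qed

lemma teq_sum: "finite I \<Longrightarrow> (\<And>i. i \<in> I \<Longrightarrow> teq S add mul R (X i) (Y i)) \<Longrightarrow>
   teq S add mul R (\<lambda>q. \<Sum>i\<in>I. X i q) (\<lambda>q. \<Sum>i\<in>I. Y i q)"
proof (induction I rule: finite_induct)
  case empty then show ?case by (simp add: teq_refl)
next
  case (insert i I)
  then have "teq S add mul R (\<lambda>q. X i q + (\<Sum>i\<in>I. X i q)) (\<lambda>q. Y i q + (\<Sum>i\<in>I. Y i q))"
    by (intro teq_add) auto
  then show ?case using insert by simp
qed



context pa begin

abbreviation "TE \<equiv> teq S skew_add mul (range emb)"

definition "Psi p q x = fst x p * \<alpha> p (snd x q * u (iv p))"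

definition "sumf F f = (\<lambda>k. \<Sum>i\<in>F. f i k)"

lemma zero_S: "skew_zero \<in> S" by (simp add: S_iff skew_zero_def)
lemma add_S: "a \<in> S \<Longrightarrow> b \<in> S \<Longrightarrow> skew_add a b \<in> S"
  by (simp add: S_iff skew_add_def A_add)

lemma sumf_S: "finite F \<Longrightarrow> (\<And>i. i \<in> F \<Longrightarrow> f i \<in> S) \<Longrightarrow> sumf F f \<in> S"
  unfolding sumf_def S_iff by (auto intro!: A_sum sum.neutral simp: S_in S_out)

lemma ind_zero: assumes b: "b \<in> S" shows "TE (ind (skew_zero, b)) (\<lambda>q. 0)"
proof -
  have zz: "skew_add skew_zero skew_zero = skew_zero" by (simp add: skew_add_def skew_zero_def)
  have "(\<lambda>q. ind (skew_add skew_zero skew_zero, b) q - ind (skew_zero, b) q - ind (skew_zero, b) q)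
    \<in> tens_zero S skew_add mul (range emb)" using zero_S b by (intro tens_zero.tz_left)
  then have "(\<lambda>q. - ind (skew_zero, b) q) \<in> tens_zero S skew_add mul (range emb)" unfolding zz by simp
  then have "(\<lambda>q. - (- ind (skew_zero, b) q)) \<in> tens_zero S skew_add mul (range emb)"
    by (rule tens_zero.tz_neg)
  then show ?thesis unfolding teq_def by simp
qed

lemma ind_add_left: assumes "a \<in> S" "a' \<in> S" "b \<in> S"
  shows "TE (ind (skew_add a a', b)) (\<lambda>q. ind (a, b) q + ind (a', b) q)"
proof -
  have "(\<lambda>q. ind (skew_add a a', b) q - ind (a, b) q - ind (a', b) q)
    \<in> tens_zero S skew_add mul (range emb)" using assms by (intro tens_zero.tz_left)
  moreover have "(\<lambda>q. ind (skew_add a a', b) q - ind (a, b) q - ind (a', b) q)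
     = (\<lambda>q. ind (skew_add a a', b) q - (ind (a, b) q + ind (a', b) q))" by auto
  ultimately show ?thesis unfolding teq_def by simp
qed

lemma ind_add_right: assumes "a \<in> S" "b \<in> S" "b' \<in> S"
  shows "TE (ind (a, skew_add b b')) (\<lambda>q. ind (a, b) q + ind (a, b') q)"
proof -
  have "(\<lambda>q. ind (a, skew_add b b') q - ind (a, b) q - ind (a, b') q)
    \<in> tens_zero S skew_add mul (range emb)" using assms by (intro tens_zero.tz_right)
  moreover have "(\<lambda>q. ind (a, skew_add b b') q - ind (a, b) q - ind (a, b') q)
     = (\<lambda>q. ind (a, skew_add b b') q - (ind (a, b) q + ind (a, b') q))" by auto
  ultimately show ?thesis unfolding teq_def by simp
qed

lemma ind_zero_right: assumes a: "a \<in> S" shows "TE (ind (a, skew_zero)) (\<lambda>q. 0)"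
proof -
  have zz: "skew_add skew_zero skew_zero = skew_zero" by (simp add: skew_add_def skew_zero_def)
  have "(\<lambda>q. ind (a, skew_add skew_zero skew_zero) q - ind (a, skew_zero) q - ind (a, skew_zero) q)
    \<in> tens_zero S skew_add mul (range emb)" using zero_S a by (intro tens_zero.tz_right)
  then have "(\<lambda>q. - ind (a, skew_zero) q) \<in> tens_zero S skew_add mul (range emb)" unfolding zz by simp
  then have "(\<lambda>q. - (- ind (a, skew_zero) q)) \<in> tens_zero S skew_add mul (range emb)"
    by (rule tens_zero.tz_neg)
  then show ?thesis unfolding teq_def by simp
qed

lemma sumf_insert: "finite F \<Longrightarrow> i \<notin> F \<Longrightarrow> sumf (insert i F) f = skew_add (f i) (sumf F f)"
  by (rule ext) (simp add: sumf_def skew_add_def)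

lemma sumf_empty: "sumf {} f = skew_zero" by (rule ext) (simp add: sumf_def skew_zero_def)

lemma ind_sum_left: assumes "finite F" "\<And>i. i \<in> F \<Longrightarrow> f i \<in> S" "b \<in> S"
  shows "TE (ind (sumf F f, b)) (\<lambda>q. \<Sum>i\<in>F. ind (f i, b) q)"
  using assms
proof (induction F rule: finite_induct)
  case empty then show ?case using ind_zero by (simp add: sumf_empty)
next
  case (insert i F)
  have "TE (ind (sumf (insert i F) f, b)) (\<lambda>q. ind (f i, b) q + ind (sumf F f, b) q)"
    unfolding sumf_insert[OF insert(1,2)] using insert by (intro ind_add_left sumf_S) auto
  moreover have "TE (\<lambda>q. ind (f i, b) q + ind (sumf F f, b) q) (\<lambda>q. ind (f i, b) q + (\<Sum>i\<in>F. ind (f i, b) q))"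
    using insert by (intro teq_add teq_refl) auto
  ultimately show ?case using insert by (simp add: teq_trans)
qed

lemma ind_sum_right: assumes "finite F" "\<And>i. i \<in> F \<Longrightarrow> f i \<in> S" "a \<in> S"
  shows "TE (ind (a, sumf F f)) (\<lambda>q. \<Sum>i\<in>F. ind (a, f i) q)"
  using assms
proof (induction F rule: finite_induct)
  case empty then show ?case using ind_zero_right by (simp add: sumf_empty)
next
  case (insert i F)
  have "TE (ind (a, sumf (insert i F) f)) (\<lambda>q. ind (a, f i) q + ind (a, sumf F f) q)"
    unfolding sumf_insert[OF insert(1,2)] using insert by (intro ind_add_right sumf_S) auto
  moreover have "TE (\<lambda>q. ind (a, f i) q + ind (a, sumf F f) q) (\<lambda>q. ind (a, f i) q + (\<Sum>i\<in>F. ind (a, f i) q))"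
    using insert by (intro teq_add teq_refl) auto
  ultimately show ?case using insert by (simp add: teq_trans)
qed

lemma ind_bal: assumes "a \<in> S" "b \<in> S"
  shows "TE (ind (mul a (emb r), b)) (ind (a, mul (emb r) b))"
  unfolding teq_def using assms by (intro tens_zero.tz_bal) auto

lemma Psi_left: "a \<in> S \<Longrightarrow> a' \<in> S \<Longrightarrow> Psi p q (skew_add a a', b) = Psi p q (a, b) + Psi p q (a', b)"
  by (simp add: Psi_def skew_add_def distrib_right)

lemma Psi_right: assumes "a \<in> S" "b \<in> S" "b' \<in> S"
  shows "Psi p q (a, skew_add b b') = Psi p q (a, b) + Psi p q (a, b')"
proof (cases "p \<in> M")
  case True then show ?thesis
    by (simp add: Psi_def skew_add_def distrib_right al_add distrib_left)
next
  case False then show ?thesis using assms by (simp add: Psi_def S_out)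
qed

lemma Psi_bal: assumes a: "a \<in> S" and b: "b \<in> S" and r: "r \<in> range emb"
  shows "Psi p q (mul a r, b) = Psi p q (a, mul r b)"
proof -
  obtain r0 where r0: "r = emb r0" using r by auto
  show ?thesis
  proof (cases "p \<in> M")
    case False then show ?thesis using a by (simp add: Psi_def r0 mul_emb_right S_out)
  next
    case p: True
    have "Psi p q (mul a r, b) = a p * (\<alpha> p (r0 * u (iv p)) * \<alpha> p (b q * u (iv p)))"
      by (simp add: Psi_def r0 mul_emb_right a mult.assoc)
    also have "\<dots> = a p * \<alpha> p (r0 * u (iv p) * (b q * u (iv p)))" using p by (simp add: al_mult)
    also have "r0 * u (iv p) * (b q * u (iv p)) = r0 * b q * u (iv p)"
    proof -
      have "u (iv p) * (b q * u (iv p)) = b q * u (iv p)"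
        using u_central[of "iv p" "b q * u (iv p)"] p by (simp add: mult.assoc)
      then show ?thesis by (simp add: mult.assoc)
    qed
    finally show ?thesis by (simp add: Psi_def r0 mul_emb_left b)
  qed
qed

lemma Psi_tens: "tens_eq S skew_add mul (range emb) L L' \<Longrightarrow>
   (\<Sum>x\<leftarrow>L. Psi p q x) = (\<Sum>x\<leftarrow>L'. Psi p q x)"
  by (rule tens_eq_Lin[where S=S and add=skew_add and P="Psi p q" and mul=mul and R="range emb"])
     (auto simp: Psi_left Psi_right Psi_bal)

lemma v_add: "v (c + d) p = skew_add (v c p) (v d p)"
  by (rule ext) (simp add: v_def skew_add_def distrib_right)
lemma v_zero: "v 0 p = skew_zero" by (rule ext) (simp add: v_def skew_zero_def)

lemma NF1: assumes s: "s \<in> S" and t: "t \<in> S"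
  shows "TE (ind (s, t)) (\<lambda>x. \<Sum>p\<in>M. \<Sum>q\<in>M. ind (v (Psi p q (s, t)) p, v 1 q) x)"
proof -
  have ds: "s = sumf M (\<lambda>p. v (s p) p)" using decomp[OF s] by (simp add: sumf_def)
  have dt: "t = sumf M (\<lambda>q. v (t q) q)" using decomp[OF t] by (simp add: sumf_def)
  have st1: "TE (ind (s, t)) (\<lambda>x. \<Sum>p\<in>M. ind (v (s p) p, t) x)"
    using ind_sum_left[of M "\<lambda>p. v (s p) p" t] t ds fin by (simp add: v_S)
  have st2: "TE (ind (v (s p) p, t)) (\<lambda>x. \<Sum>q\<in>M. ind (v (s p) p, v (t q) q) x)" if p: "p \<in> M" for p
    using ind_sum_right[of M "\<lambda>q. v (t q) q" "v (s p) p"] dt fin p by (simp add: v_S)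
  have st3: "TE (ind (v (s p) p, v (t q) q)) (ind (v (Psi p q (s, t)) p, v 1 q))"
    if p: "p \<in> M" and q: "q \<in> M" for p q
  proof -
    have e1: "mul (v (s p) p) (emb (t q)) = v (Psi p q (s, t)) p"
    proof
      fix k
      show "mul (v (s p) p) (emb (t q)) k = v (Psi p q (s, t)) p k"
      proof (cases "k = p")
        case True
        have "s p * u p * \<alpha> p (t q * u (iv p)) = s p * \<alpha> p (t q * u (iv p)) * u p"
          using p s S_in[of s p] Au[of p "s p"] Au[of p "\<alpha> p (t q * u (iv p))"]
          by (simp add: al_mem mult.assoc)
        then show ?thesis using True p by (simp add: mul_emb_right v_S v_at Psi_def)
      next
        case False then show ?thesis using p by (simp add: mul_emb_right v_S v_at)
      qed
    qed
    have e2: "mul (emb (t q)) (v 1 q) = v (t q) q"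
      by (rule ext) (simp add: mul_emb_left v_S q v_at)
    show ?thesis using ind_bal[of "v (s p) p" "v 1 q" "t q"] p q
      by (simp add: v_S e1 e2 teq_sym)
  qed
  have "TE (\<lambda>x. \<Sum>p\<in>M. ind (v (s p) p, t) x) (\<lambda>x. \<Sum>p\<in>M. \<Sum>q\<in>M. ind (v (s p) p, v (t q) q) x)"
    using fin st2 by (intro teq_sum) auto
  moreover have "TE (\<lambda>x. \<Sum>p\<in>M. \<Sum>q\<in>M. ind (v (s p) p, v (t q) q) x)
                   (\<lambda>x. \<Sum>p\<in>M. \<Sum>q\<in>M. ind (v (Psi p q (s, t)) p, v 1 q) x)"
    using fin st3 by (intro teq_sum) auto
  ultimately show ?thesis by (rule teq_trans[OF st1 teq_trans])
qed

definition "NFT L p q = (\<Sum>x\<leftarrow>L. Psi p q x)"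
definition "NFF L = (\<lambda>x. \<Sum>p\<in>M. \<Sum>q\<in>M. ind (v (NFT L p q) p, v 1 q) x)"

lemma NF: "set L \<subseteq> S \<times> S \<Longrightarrow> TE (formal L) (NFF L)"
proof (induction L)
  case Nil
  have "TE (\<lambda>x. \<Sum>p\<in>M. \<Sum>q\<in>M. ind (skew_zero, v 1 q) x) (\<lambda>x. \<Sum>p\<in>M. \<Sum>q\<in>M. 0)"
    using fin by (intro teq_sum ind_zero) (auto simp: v_S)
  then have "TE (NFF []) (\<lambda>x. 0)" by (simp add: NFF_def NFT_def v_zero)
  then show ?case by (simp add: formal_def teq_sym)
next
  case (Cons y L)
  obtain s t where y: "y = (s, t)" by force
  have st: "s \<in> S" "t \<in> S" using Cons y by auto
  have e: "formal (y # L) = (\<lambda>q. ind y q + formal L q)"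
    by (rule ext) (simp add: formal_def ind_def)
  have "TE (NFF (y # L)) (\<lambda>x. \<Sum>p\<in>M. \<Sum>q\<in>M. (ind (v (Psi p q y) p, v 1 q) x + ind (v (NFT L p q) p, v 1 q) x))"
    unfolding NFF_def NFT_def using fin
    by (intro teq_sum) (auto simp: v_add intro!: ind_add_left v_S)
  also have "(\<lambda>x. \<Sum>p\<in>M. \<Sum>q\<in>M. (ind (v (Psi p q y) p, v 1 q) x + ind (v (NFT L p q) p, v 1 q) x))
    = (\<lambda>x. (\<Sum>p\<in>M. \<Sum>q\<in>M. ind (v (Psi p q y) p, v 1 q) x) + NFF L x)"
    by (simp add: NFF_def sum.distrib)
  finally have 1: "TE (NFF (y # L)) (\<lambda>x. (\<Sum>p\<in>M. \<Sum>q\<in>M. ind (v (Psi p q y) p, v 1 q) x) + NFF L x)" .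
  have 2: "TE (formal (y # L)) (\<lambda>x. (\<Sum>p\<in>M. \<Sum>q\<in>M. ind (v (Psi p q y) p, v 1 q) x) + NFF L x)"
    unfolding e using Cons NF1[OF st] y by (intro teq_add) auto
  show ?case by (rule teq_trans[OF 2 teq_sym[OF 1]])
qed

lemma NF_eq: assumes "set L \<subseteq> S \<times> S" "set L' \<subseteq> S \<times> S"
  and "\<And>p q. p \<in> M \<Longrightarrow> q \<in> M \<Longrightarrow> NFT L p q = NFT L' p q"
  shows "tens_eq S skew_add mul (range emb) L L'"
proof -
  have "NFF L = NFF L'" unfolding NFF_def using assms(3) by (intro ext sum.cong) auto
  then have a: "TE (formal L) (NFF L')" using NF[OF assms(1)] by simp
  have "TE (formal L) (formal L')" by (rule teq_trans[OF a teq_sym[OF NF[OF assms(2)]]])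
  then show ?thesis by (simp add: teq_def tens_eq_def)
qed

end


lemma sum_list_swap: "(\<Sum>x\<leftarrow>xs. \<Sum>g\<in>H. f x g) = (\<Sum>g\<in>H. \<Sum>x\<leftarrow>xs. (f x g :: 'a::comm_monoid_add))"
  by (induction xs) (simp_all add: sum.distrib)

lemma foldr_skew: "foldr (\<lambda>(a, b) acc. skew_add (m a b) acc) xs skew_zero
   = (\<lambda>k. \<Sum>x\<leftarrow>xs. m (fst x) (snd x) k)"
  by (induction xs) (auto simp: skew_add_def skew_zero_def)

context pa begin

lemma al_u': "g \<in> M \<Longrightarrow> \<alpha> (iv g) (u g) = u (iv g)"
  using al_u[of "iv g"] by simp

lemma emb_S: "emb r \<in> S" unfolding S_iff by (auto simp: emb_at)

lemma Psi_obj: assumes e: "e \<in> Ob" and b: "snd x \<in> S" shows "Psi e e x = fst x e * snd x e * u e"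
  using e b by (simp add: Psi_def al_id mult.assoc)

lemma trace_sum: assumes j: "j \<in> Ob"
  shows "trace_j G u \<alpha> j c = (\<Sum>g\<in>{g\<in>M. tg g = j}. \<alpha> g (c * u (iv g)))"
proof -
  have fo: "finite Ob" using fin finite_subset[of Ob M] obj_mor by blast
  have "trace_j G u \<alpha> j c = (\<Sum>ei\<in>Ob. \<Sum>g\<in>{g\<in>{g\<in>M. tg g = j}. sr g = ei}. \<alpha> g (c * u (iv g)))"
    unfolding trace_j_def trace_ij_def hom_def by (intro sum.cong) auto
  also have "\<dots> = (\<Sum>g\<in>{g\<in>M. tg g = j}. \<alpha> g (c * u (iv g)))"
    by (rule sum.group) (use fin fo in auto)
  finally show ?thesis .
qed

section \<open>(i) implies (ii)\<close>

lemma dir1: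
  assumes orth: "\<forall>e\<in>Ob. \<forall>f\<in>Ob. e \<noteq> f \<longrightarrow> u e * u f = 0"
    and xs: "set xs \<subseteq> S \<times> S"
    and m1: "foldr (\<lambda>(a, b) acc. skew_add (mul a b) acc) xs skew_zero = skew_one G u"
    and comm: "\<forall>s\<in>S. tens_eq S skew_add mul (range emb)
                  (map (\<lambda>(a, b). (mul s a, b)) xs) (map (\<lambda>(a, b). (a, mul b s)) xs)"
  shows "\<exists>a\<in>center. \<forall>e\<in>Ob. trace_j G u \<alpha> e a = u e"
proof -
  define T where "T p q = (\<Sum>x\<leftarrow>xs. Psi p q x)" for p q
  define a where "a = (\<Sum>e\<in>Ob. T e e)"
  have fo: "finite Ob" using fin finite_subset[of Ob M] obj_mor by blast
  have xsS: "fst x \<in> S" "snd x \<in> S" if "x \<in> set xs" for x using xs that by auto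
  have C: "(\<Sum>x\<leftarrow>xs. Psi p q (mul s (fst x), snd x)) = (\<Sum>x\<leftarrow>xs. Psi p q (fst x, mul (snd x) s))"
    if s: "s \<in> S" for s p q
    using Psi_tens[OF comm[rule_format, OF s], of p q] by (simp add: o_def case_prod_beta)
  have Tu: "T e e * u e = T e e" if e: "e \<in> Ob" for e
  proof -
    have "T e e = (\<Sum>x\<leftarrow>xs. fst x e * snd x e * u e)"
      unfolding T_def using e xsS by (intro arg_cong[where f=sum_list] map_cong) (auto simp: Psi_obj case_prod_beta)
    also have "\<dots> = (\<Sum>x\<leftarrow>xs. fst x e * snd x e) * u e" by (simp add: sum_list_mult_const)
    finally show ?thesis using e by (simp add: mult.assoc)
  qed
  have cen: "r * a = a * r" for r
  proof -
    have "r * T e e = T e e * r" if e: "e \<in> Ob" for e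
    proof -
      have "r * T e e = (\<Sum>x\<leftarrow>xs. Psi e e (mul (emb r) (fst x), snd x))"
        unfolding T_def sum_list_const_mult[symmetric] using e xsS
        by (intro arg_cong[where f=sum_list] map_cong) (auto simp: Psi_obj mul_emb_left mult.assoc case_prod_beta)
      also have "\<dots> = (\<Sum>x\<leftarrow>xs. Psi e e (fst x, mul (snd x) (emb r)))" using C[OF emb_S] .
      also have "\<dots> = (\<Sum>x\<leftarrow>xs. Psi e e x * r)"
      proof (intro arg_cong[where f=sum_list] map_cong refl)
        fix x assume x: "x \<in> set xs"
        have "Psi e e (fst x, mul (snd x) (emb r)) = fst x e * (snd x e * (r * u e)) * u e"
          using e x xsS by (simp add: Psi_obj mul_closed emb_S mul_emb_right al_id)
        also have "\<dots> = fst x e * snd x e * u e * r"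
          using e u_central[of e r] by (simp add: mult.assoc)
        finally show "Psi e e (fst x, mul (snd x) (emb r)) = Psi e e x * r"
          using e x xsS by (simp add: Psi_obj case_prod_beta)
      qed
      also have "\<dots> = T e e * r" unfolding T_def by (simp add: sum_list_mult_const)
      finally show ?thesis .
    qed
    then show ?thesis unfolding a_def by (simp add: sum_distrib_left sum_distrib_right)
  qed
  have Tg: "T g (iv g) = \<alpha> g (T (sr g) (sr g) * u (iv g))" if g: "g \<in> M" for g
  proof -
    let ?e = "sr g"
    have ev: "cm ?e (iv g) = iv g" using g lunit[of "iv g"] by simp
    have "T g (iv g) = (\<Sum>x\<leftarrow>xs. Psi g ?e (fst x, mul (snd x) (v 1 g)))"
      unfolding T_def
    proof (intro arg_cong[where f=sum_list] map_cong refl)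
      fix x assume x: "x \<in> set xs"
      have "mul (snd x) (v 1 g) ?e = snd x (iv g)"
        using g ev x xsS by (simp add: mul_v_right al_inv S_in al_mem Au)
      then show "Psi g (iv g) x = Psi g ?e (fst x, mul (snd x) (v 1 g))"
        by (simp add: Psi_def)
    qed
    also have "\<dots> = (\<Sum>x\<leftarrow>xs. Psi g ?e (mul (v 1 g) (fst x), snd x))"
      using C[OF v_S[OF g]] by simp
    also have "\<dots> = (\<Sum>x\<leftarrow>xs. \<alpha> g (Psi ?e ?e x * u (iv g)))"
    proof (intro arg_cong[where f=sum_list] map_cong refl)
      fix x assume x: "x \<in> set xs"
      have m: "mul (v 1 g) (fst x) g = \<alpha> g (u (iv g) * fst x ?e)"
        using g by (simp add: mul_v_left al_u')
      define U where "U = u (iv g)"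
      define F where "F = fst x ?e"
      define B where "B = snd x ?e"
      have c1: "U * F = F * U" and c2: "U * B = B * U" unfolding U_def using g u_central by auto
      have UU: "U * U = U" unfolding U_def using g by simp
      have eU: "u ?e * U = U" unfolding U_def using g u_src[of g] u_central[of ?e "u (iv g)"] by simp
      have "U * F * (B * U) = (F * U) * (B * U)" by (simp only: c1)
      also have "\<dots> = F * ((U * B) * U)" by (simp only: mult.assoc)
      also have "\<dots> = F * ((B * U) * U)" by (simp only: c2)
      also have "\<dots> = F * B * (U * U)" by (simp only: mult.assoc)
      also have "\<dots> = F * B * U" by (simp only: UU)
      finally have k1: "U * F * (B * U) = F * B * U" .
      have k2: "Psi ?e ?e x * U = F * B * U"
        using g x xsS Psi_obj[of ?e x] eU unfolding F_def B_def by (simp add: mult.assoc)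
      have k3: "Psi g ?e (mul (v 1 g) (fst x), snd x) = \<alpha> g (U * F) * \<alpha> g (B * U)"
        unfolding U_def F_def B_def by (simp add: Psi_def m)
      have "\<alpha> g (U * F) * \<alpha> g (B * U) = \<alpha> g (U * F * (B * U))"
        unfolding U_def using g by (simp add: al_mult A_mult_r A_mult_l)
      then show "Psi g ?e (mul (v 1 g) (fst x), snd x) = \<alpha> g (Psi ?e ?e x * u (iv g))"
        using k1 k2 k3 unfolding U_def by simp
    qed
    also have "\<dots> = \<alpha> g ((\<Sum>x\<leftarrow>xs. Psi ?e ?e x) * u (iv g))"
      using g by (simp add: sum_list_mult_const[symmetric] al_sum_list)
    finally show ?thesis unfolding T_def .
  qed
  have au: "a * u (iv g) = T (sr g) (sr g) * u (iv g)" if g: "g \<in> M" for g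
  proof -
    have "a * u (iv g) = (\<Sum>e\<in>Ob. T e e * u (iv g))" unfolding a_def by (simp add: sum_distrib_right)
    also have "\<dots> = T (sr g) (sr g) * u (iv g)"
    proof (rule single_sum)
      fix e assume e: "e \<in> Ob" "e \<noteq> sr g"
      have "T e e * u (iv g) = T e e * u e * (u (sr g) * u (iv g))"
        using Tu[OF e(1)] g u_src[of g] u_central[of "sr g" "u (iv g)"] by simp
      also have "\<dots> = T e e * (u e * u (sr g)) * u (iv g)" by (simp only: mult.assoc)
      also have "u e * u (sr g) = 0" using orth e g by simp
      finally show "T e e * u (iv g) = 0" by simp
    qed (use fo g in auto)
    finally show ?thesis .
  qed
  have "trace_j G u \<alpha> j a = u j" if j: "j \<in> Ob" for j
  proof -
    have "u j = skew_one G u j" using j by (simp add: skew_one_def)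
    also have "\<dots> = (\<Sum>x\<leftarrow>xs. mul (fst x) (snd x) j)" using m1[symmetric] by (simp add: foldr_skew)
    also have "\<dots> = (\<Sum>x\<leftarrow>xs. \<Sum>g\<in>{g\<in>M. tg g = j}. Psi g (iv g) x)"
      using xsS j by (intro arg_cong[where f=sum_list] map_cong refl) (auto simp: mul_obj Psi_def)
    also have "\<dots> = (\<Sum>g\<in>{g\<in>M. tg g = j}. T g (iv g))" unfolding T_def by (rule sum_list_swap)
    also have "\<dots> = trace_j G u \<alpha> j a" using j by (simp add: trace_sum Tg au)
    finally show ?thesis by simp
  qed
  moreover have "a \<in> center" unfolding center_def using cen by auto
  ultimately show ?thesis by blast
qed

end


context pa begin

lemma b_central: assumes ac: "a \<in> center" and p: "p \<in> M"
  shows "\<alpha> p (a * u (iv p)) * x = x * \<alpha> p (a * u (iv p))"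
proof -
  let ?b = "\<alpha> p (a * u (iv p))"
  have bA: "?b \<in> A p" using p by (simp add: al_mem)
  obtain w where w: "w \<in> A (iv p)" "\<alpha> p w = x * u p" using al_surj[of p "x * u p"] p by auto
  have ca: "a * y = y * a" for y using ac unfolding center_def by auto
  have "a * u (iv p) * w = w * (a * u (iv p))"
  proof -
    have "a * u (iv p) * w = a * w" using w p uA[of "iv p" w] by (simp add: mult.assoc)
    also have "\<dots> = w * a" by (rule ca)
    also have "\<dots> = w * u (iv p) * a" using w p Au[of "iv p" w] by simp
    also have "\<dots> = w * (a * u (iv p))" using ca[of "u (iv p)"] by (simp add: mult.assoc)
    finally show ?thesis .
  qed
  note eq = this
  have "?b * \<alpha> p w = \<alpha> p (a * u (iv p) * w)" using p w by (simp add: al_mult)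
  also have "\<dots> = \<alpha> p (w * (a * u (iv p)))" using eq by simp
  also have "\<dots> = \<alpha> p w * ?b" using p w by (simp add: al_mult)
  finally have "?b * \<alpha> p w = \<alpha> p w * ?b" .
  then have 1: "?b * (x * u p) = (x * u p) * ?b" using w by simp
  have "?b * x = ?b * u p * x" using bA p Au[of p ?b] by simp
  also have "\<dots> = ?b * (x * u p)" using u_central[OF p, of x] by (simp add: mult.assoc)
  also have "\<dots> = x * (u p * ?b)" using 1 by (simp add: mult.assoc)
  also have "\<dots> = x * ?b" using bA p uA[of p ?b] by simp
  finally show ?thesis .
qed

lemma key:
  assumes ac: "a \<in> center" and p: "p \<in> M" and q: "q \<in> M" and c: "sr p = tg q" and s: "s \<in> S"
  shows "\<alpha> (cm p q) (\<alpha> (iv (cm p q)) (s (cm p q)) * \<alpha> (iv q) (a * u q)) * \<alpha> p (u q * u (iv p))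
        = \<alpha> p (a * u (iv p)) * s (cm p q)"
proof -
  define k where "k = cm p q"
  define b where "b = \<alpha> p (a * u (iv p))"
  define y where "y = \<alpha> (iv k) (s k)"
  define c' where "c' = \<alpha> (iv q) (a * u q)"
  define w where "w = a * u q * u (iv p)"
  have k: "k \<in> M" "sr k = sr q" "tg k = tg p" unfolding k_def using p q c by auto
  have sk: "s k \<in> A k" using s k by (simp add: S_in)
  have y: "y \<in> A (iv k)" unfolding y_def using k sk by (simp add: al_inv_mem)
  have cA: "c' \<in> A (iv q)" unfolding c'_def using q al_mem[of "iv q" "a * u q"] by simp
  have ivk: "iv k = cm (iv q) (iv p)" unfolding k_def using p q c by (simp add: iv_cm)
  have pa3a: "\<alpha> (iv q) (u q * u (iv p)) = u (iv q) * u (iv k)"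
    using pa3[of "iv q" "iv p"] p q c ivk by simp
  have cuk: "c' * u (iv k) = \<alpha> (iv q) w"
  proof -
    have cc: "c' * u (iv q) = c'" using cA q Au[of "iv q" c'] by simp
    have "c' * (u (iv q) * u (iv k)) = c' * u (iv k)" by (simp add: mult.assoc[symmetric] cc)
    then have "c' * u (iv k) = c' * (u (iv q) * u (iv k))" by simp
    also have "\<dots> = \<alpha> (iv q) (a * u q) * \<alpha> (iv q) (u q * u (iv p))" unfolding c'_def pa3a ..
    also have "\<dots> = \<alpha> (iv q) (a * u q * (u q * u (iv p)))"
      using q by (simp add: al_mult[symmetric] A_mult_r A_mult_l)
    also have "a * u q * (u q * u (iv p)) = w" unfolding w_def using q u_idem[OF q] by (metis mult.assoc)
    finally show ?thesis .
  qed
  have wq: "w \<in> A q" unfolding w_def using q p u_central[of q] by (metis A_mult_l A_u A_mult_r iv_mem)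
  have wp: "w \<in> A (iv p)" unfolding w_def using p by (simp add: A_mult_l)
  have aw1: "\<alpha> (iv q) w \<in> A (iv k)" using cuk k by (metis A_mult_l A_u iv_mem)
  have aw2: "\<alpha> (iv q) w \<in> A (iv q)" using al_mem[of "iv q" w] q wq by simp
  have kq: "cm k (iv q) = p" unfolding k_def using p q c cancel_r[of p q] by simp
  have comp: "\<alpha> k (\<alpha> (iv q) w) = \<alpha> p w"
    using act[of k "iv q" w] k q wq aw1 aw2 kq by simp
  have pa3b: "\<alpha> p (u (iv p) * u q) = u p * u k" unfolding k_def using pa3[of p q] p q c by simp
  have uu: "u q * u (iv p) = u (iv p) * u q" using u_central[of q] q by simp
  have apw: "\<alpha> p w = b * (u p * u k)"
  proof -
    have "w = a * (u q * u (iv p))" unfolding w_def by (simp only: mult.assoc)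
    also have "\<dots> = a * (u (iv p) * u q)" using uu by simp
    also have "\<dots> = a * ((u (iv p) * u (iv p)) * u q)" using p by simp
    also have "\<dots> = a * u (iv p) * (u (iv p) * u q)" by (simp only: mult.assoc)
    finally have "w = a * u (iv p) * (u (iv p) * u q)" .
    then have "\<alpha> p w = b * \<alpha> p (u (iv p) * u q)" unfolding b_def using p
      by (simp add: al_mult A_mult_l A_mult_r)
    then show ?thesis using pa3b by simp
  qed
  have uu: "u q * u (iv p) = u (iv p) * u q" using u_central[of q] q by simp
  have "\<alpha> k (y * c') = s k * \<alpha> k (c' * u (iv k))"
    using al_mult_gen[of k y c'] k y unfolding y_def using al_inv'[of k "s k"] sk by simp
  also have "\<dots> = s k * (b * (u p * u k))" using cuk comp apw by simp
  finally have L: "\<alpha> k (y * c') * \<alpha> p (u q * u (iv p)) = s k * (b * (u p * u k)) * (u p * u k)"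
    using uu pa3b by simp
  have bc: "b * z = z * b" for z unfolding b_def using b_central[OF ac p] .
  have bp: "b * u p = b" unfolding b_def using p by (simp add: Au al_mem)
  have skk: "s k * u k = s k" using sk k Au by simp
  have upk: "u p * u k = u k * u p" using u_central[of p] p by simp
  have idem: "(u p * u k) * (u p * u k) = u p * u k"
    using p k upk by (metis mult.assoc u_idem)
  have "s k * (b * (u p * u k)) * (u p * u k) = s k * (b * (u p * u k))"
    using idem by (simp add: mult.assoc)
  also have "\<dots> = s k * (b * u k)" using bp by (simp add: mult.assoc[symmetric])
  also have "\<dots> = s k * (u k * b)" using bc by simp
  also have "\<dots> = s k * b" using skk by (simp add: mult.assoc[symmetric])
  also have "\<dots> = b * s k" using bc by simp
  finally show ?thesis using L unfolding k_def y_def c'_def b_def by simp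
qed

end


context pa begin

lemma term_one: assumes g: "g \<in> M" and bg: "bg \<in> A g"
  shows "mul (v bg g) (v 1 (iv g)) k = (if tg g = k then bg else 0)"
proof (cases "tg g = k")
  case True
  have ckg: "cm k g = g" using g lunit[of g] True by simp
  have kO: "k \<in> Ob" "k \<in> M" "sr k = k" using True g by auto
  then have "mul (v bg g) (v 1 (iv g)) k = \<alpha> g (\<alpha> (iv g) (bg * u g) * u (iv g))"
    using True g kO ckg by (simp add: mul_v_right v_at)
  also have "\<dots> = bg" using g bg by (simp add: Au al_inv_mem al_inv')
  finally show ?thesis using True by simp
next
  case False
  show ?thesis
  proof (cases "k \<in> M \<and> sr k = tg g")
    case True
    have "cm k g \<noteq> g"
    proof
      assume "cm k g = g"
      then have "k = cm (cm k g) (iv g)" using True g cancel_r[of k g] by simp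
      also have "\<dots> = tg g" using \<open>cm k g = g\<close> g by simp
      finally show False using False by simp
    qed
    then show ?thesis using True False g by (simp add: mul_v_right v_at)
  next
    case F2: False
    have "\<not> (k \<in> M \<and> sr k = sr (iv g))" using F2 g by simp
    then show ?thesis using False g by (simp only: mul_v_right[OF iv_mem[OF g]] if_False)
  qed
qed

lemma dir2:
  assumes ac: "a \<in> center" and tr: "\<forall>e\<in>Ob. trace_j G u \<alpha> e a = u e"
  shows "separable_ext S skew_add mul skew_zero (skew_one G u) (range emb)"
proof -
  obtain gs where gs: "set gs = M" "distinct gs" using finite_distinct_list[OF fin] by blast
  define b where "b g = \<alpha> g (a * u (iv g))" for g
  have bA: "b g \<in> A g" if "g \<in> M" for g unfolding b_def using that by (simp add: al_mem)
  define xs where "xs = map (\<lambda>g. (v (b g) g, v 1 (iv g))) gs"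
  have xsS: "set xs \<subseteq> S \<times> S" unfolding xs_def using gs by (auto simp: v_S)
  have m1: "foldr (\<lambda>(a, b) acc. skew_add (mul a b) acc) xs skew_zero = skew_one G u"
  proof
    fix k
    have "foldr (\<lambda>(a, b) acc. skew_add (mul a b) acc) xs skew_zero k
        = (\<Sum>g\<leftarrow>gs. mul (v (b g) g) (v 1 (iv g)) k)"
      by (simp add: foldr_skew xs_def o_def)
    also have "\<dots> = (\<Sum>g\<in>M. mul (v (b g) g) (v 1 (iv g)) k)"
      using gs by (simp add: sum_list_distinct_conv_sum_set)
    also have "\<dots> = (\<Sum>g\<in>M. if tg g = k then b g else 0)"
      by (intro sum.cong refl) (simp add: term_one bA)
    also have "\<dots> = (\<Sum>g\<in>{g\<in>M. tg g = k}. b g)"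
      using fin by (simp add: sum.inter_filter)
    also have "\<dots> = skew_one G u k"
    proof (cases "k \<in> Ob")
      case True then show ?thesis using tr trace_sum[OF True, of a]
        by (simp add: skew_one_def b_def)
    next
      case False
      have e: "{g\<in>M. tg g = k} = {}" using False by auto
      show ?thesis by (simp only: e sum.empty) (simp add: skew_one_def False)
    qed
    finally show "foldr (\<lambda>(a, b) acc. skew_add (mul a b) acc) xs skew_zero k = skew_one G u k" .
  qed
  have comm: "tens_eq S skew_add mul (range emb)
        (map (\<lambda>(a, b). (mul s a, b)) xs) (map (\<lambda>(a, b). (a, mul b s)) xs)" if s: "s \<in> S" for s
  proof (rule NF_eq)
    show "set (map (\<lambda>(a, b). (mul s a, b)) xs) \<subseteq> S \<times> S"
      using xsS s by (auto simp: mul_closed)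
    show "set (map (\<lambda>(a, b). (a, mul b s)) xs) \<subseteq> S \<times> S"
      using xsS s by (auto simp: mul_closed)
    fix p q assume p: "p \<in> M" and q: "q \<in> M"
    have L: "NFT (map (\<lambda>(a, b). (mul s a, b)) xs) p q
        = mul s (v (b (iv q)) (iv q)) p * \<alpha> p (u q * u (iv p))"
    proof -
      have "NFT (map (\<lambda>(a, b). (mul s a, b)) xs) p q
          = (\<Sum>g\<leftarrow>gs. Psi p q (mul s (v (b g) g), v 1 (iv g)))"
        by (simp add: NFT_def xs_def o_def)
      also have "\<dots> = (\<Sum>g\<in>M. Psi p q (mul s (v (b g) g), v 1 (iv g)))"
        using gs by (simp add: sum_list_distinct_conv_sum_set)
      also have "\<dots> = Psi p q (mul s (v (b (iv q)) (iv q)), v 1 (iv (iv q)))"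
      proof (rule single_sum)
        fix g assume g: "g \<in> M" "g \<noteq> iv q"
        have "q \<noteq> iv g" using g q by auto
        then show "Psi p q (mul s (v (b g) g), v 1 (iv g)) = 0" using p by (simp add: Psi_def v_at)
      qed (use fin q in auto)
      also have "\<dots> = mul s (v (b (iv q)) (iv q)) p * \<alpha> p (u q * u (iv p))"
        using q by (simp add: Psi_def v_at)
      finally show ?thesis .
    qed
    have R: "NFT (map (\<lambda>(a, b). (a, mul b s)) xs) p q
        = b p * u p * \<alpha> p (mul (v 1 (iv p)) s q * u (iv p))"
    proof -
      have "NFT (map (\<lambda>(a, b). (a, mul b s)) xs) p q
          = (\<Sum>g\<leftarrow>gs. Psi p q (v (b g) g, mul (v 1 (iv g)) s))"
        by (simp add: NFT_def xs_def o_def)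
      also have "\<dots> = (\<Sum>g\<in>M. Psi p q (v (b g) g, mul (v 1 (iv g)) s))"
        using gs by (simp add: sum_list_distinct_conv_sum_set)
      also have "\<dots> = Psi p q (v (b p) p, mul (v 1 (iv p)) s)"
      proof (rule single_sum)
        fix g assume g: "g \<in> M" "g \<noteq> p"
        then show "Psi p q (v (b g) g, mul (v 1 (iv g)) s) = 0" by (simp add: Psi_def v_at)
      qed (use fin p in auto)
      also have "\<dots> = b p * u p * \<alpha> p (mul (v 1 (iv p)) s q * u (iv p))"
        by (simp add: Psi_def v_at)
      finally show ?thesis .
    qed
    show "NFT (map (\<lambda>(a, b). (mul s a, b)) xs) p q = NFT (map (\<lambda>(a, b). (a, mul b s)) xs) p q"
    proof (cases "sr p = tg q")
      case False
      have "mul s (v (b (iv q)) (iv q)) p = 0" using False q by (simp add: mul_v_right)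
      moreover have "mul (v 1 (iv p)) s q = 0" using False p by (simp add: mul_v_left)
      ultimately show ?thesis using L R p by simp
    next
      case c: True
      define k where "k = cm p q"
      have k: "k \<in> M" unfolding k_def using p q c by simp
      have sk: "s k \<in> A k" using s k by (simp add: S_in)
      have bq: "b (iv q) * u (iv q) = \<alpha> (iv q) (a * u q)"
        using bA[of "iv q"] q by (simp add: Au b_def)
      have "mul s (v (b (iv q)) (iv q)) p = \<alpha> k (\<alpha> (iv k) (s k) * \<alpha> (iv q) (a * u q))"
        using p q c by (simp add: mul_v_right bq k_def)
      then have L2: "NFT (map (\<lambda>(a, b). (mul s a, b)) xs) p q = b p * s k"
        using L key[OF ac p q c s] unfolding k_def b_def by simp
      have m2: "mul (v 1 (iv p)) s q = \<alpha> (iv p) (u p * s k)"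
        using p q c by (simp add: mul_v_left al_u k_def)
      have upsk: "u p * s k \<in> A p" using p by (simp add: A_mult_r)
      have "\<alpha> p (mul (v 1 (iv p)) s q * u (iv p)) = u p * s k"
        using p upsk by (simp add: m2 Au al_inv_mem al_inv')
      then have "NFT (map (\<lambda>(a, b). (a, mul b s)) xs) p q = b p * u p * (u p * s k)" using R by simp
      also have "\<dots> = b p * s k" using p bA[OF p] Au[of p "b p"] by (simp add: mult.assoc[symmetric])
      finally show ?thesis using L2 by simp
    qed
  qed
  show ?thesis unfolding separable_ext_def using xsS m1 comm by blast
qed

end

theorem theorem3p2:
  fixes G :: "'g groupoid" and u :: "'g \<Rightarrow> 'a::ring_1" and \<alpha> :: "'g \<Rightarrow> 'a \<Rightarrow> 'a"
  assumes "is_groupoid G" and "finite (mor G)" and "connected_groupoid G"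
    and "unital_partial_action G u \<alpha>"
    and "(\<Sum>e\<in>obj G. u e) = 1"
    and "\<forall>e\<in>obj G. \<forall>f\<in>obj G. e \<noteq> f \<longrightarrow> u e * u f = 0"
  shows "separable_ext (skew_carrier G u) skew_add (skew_mult G \<alpha>) skew_zero (skew_one G u)
            (skew_emb G u ` UNIV)
         \<longleftrightarrow> (\<exists>a\<in>center. \<forall>e\<in>obj G. trace_j G u \<alpha> e a = u e)"
proof -
  interpret pa G u \<alpha> using assms(1,2,4) by unfold_locales
  show ?thesis
  proof
    assume "separable_ext (skew_carrier G u) skew_add (skew_mult G \<alpha>) skew_zero (skew_one G u)
            (skew_emb G u ` UNIV)"
    then obtain xs where "set xs \<subseteq> S \<times> S"
        "foldr (\<lambda>(a, b) acc. skew_add (mul a b) acc) xs skew_zero = skew_one G u"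
        "\<forall>s\<in>S. tens_eq S skew_add mul (range emb)
                  (map (\<lambda>(a, b). (mul s a, b)) xs) (map (\<lambda>(a, b). (a, mul b s)) xs)"
      unfolding separable_ext_def by blast
    then show "\<exists>a\<in>center. \<forall>e\<in>obj G. trace_j G u \<alpha> e a = u e" using dir1[OF assms(6)] by blast
  next
    assume "\<exists>a\<in>center. \<forall>e\<in>obj G. trace_j G u \<alpha> e a = u e"
    then show "separable_ext (skew_carrier G u) skew_add (skew_mult G \<alpha>) skew_zero (skew_one G u)
            (skew_emb G u ` UNIV)" using dir2 by blast
  qed
qed

end
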